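(* Let $n\ge2$, $r\ge1$, let $V_1,\dots,V_r\in\mathrm{Mat}(n,\mathbb{C})$ satisfy $\operatorname{tr}(V_s^*V_m)=\delta_{sm}$, and define $$P_{\mathcal T}=\sum_{s=1}^r\sum_{a,b,c,d=1}^n (V_s)_{ab}(\bar V_s)_{cd}\,E^{(n)}_{ac}\otimes E^{(n)}_{bd},\qquad A_{\mathcal T}=\sum_{s,m=1}^r E^{(r)}_{sm}\otimes\Big(\sum_{i=1}^r V_i\bar V_sV_m^tV_i^*\Big).$$ For $P\in\mathrm{Mat}(n^2,\mathbb{C})$ and real $Q>0$ consider the system $$P^*=P,\quad P^2=P,\quad Q^2(P_1P_2P_1-P_2P_1P_2)=P_1-P_2,\qquad(\ast)$$ with $P_1=P\otimes I_n$, $P_2=I_n\otimes P$. (a) If $P_{\mathcal T}$ is a nontrivial solution of $(\ast)$ and $k=\tfrac12\operatorname{rank}\big((P_{\mathcal T})_1-(P_{\mathcal T})_2\big)$, then for all integers $m\ge1$, $\operatorname{tr}(A_{\mathcal T}^m)=rn+(Q^{-2m}-1)k$. (b) If there exist a real $Q>1$ and a positive integer $k$ such that $\operatorname{tr}(A_{\mathcal T}^m)=rn+(Q^{-2m}-1)k$ for $m=1,2,3$, then $P_{\mathcal T}$ is a nontrivial solution of $(\ast)$ for this $Q$.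
   Context: $E^{(p)}_{ab}\in\mathrm{Mat}(p,\mathbb{C})$ is the matrix unit with $(E^{(p)}_{ab})_{ij}=\delta_{ai}\delta_{bj}$; $\bar V$ is entrywise complex conjugate, $V^t$ transpose, $V^*$ conjugate transpose; $\otimes$ is the Kronecker product. A solution of $(\ast)$ is trivial if $P=0$ or $P=I_n\otimes I_n$, nontrivial otherwise. *)

theory Defs
  imports "Jordan_Normal_Form.DL_Rank"
begin

(* Conventions: indices are 0-based (paper index a corresponds to a-1 here). *)

definition mtrace :: "complex mat \<Rightarrow> complex" where
  "mtrace A = (\<Sum>i<dim_row A. A $$ (i,i))"

definition madj :: "complex mat \<Rightarrow> complex mat" where
  "madj A = mat (dim_col A) (dim_row A) (\<lambda>(i,j). cnj (A $$ (j,i)))"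

definition mcnj :: "complex mat \<Rightarrow> complex mat" where
  "mcnj A = mat (dim_row A) (dim_col A) (\<lambda>(i,j). cnj (A $$ (i,j)))"

definition kron :: "complex mat \<Rightarrow> complex mat \<Rightarrow> complex mat" where
  "kron A B = mat (dim_row A * dim_row B) (dim_col A * dim_col B)
     (\<lambda>(i,j). A $$ (i div dim_row B, j div dim_col B) * B $$ (i mod dim_row B, j mod dim_col B))"

definition munit :: "nat \<Rightarrow> nat \<Rightarrow> nat \<Rightarrow> complex mat" where
  "munit p a b = mat p p (\<lambda>(i,j). if i = a \<and> j = b then 1 else 0)"

definition msum :: "nat \<Rightarrow> nat \<Rightarrow> ('i \<Rightarrow> complex mat) \<Rightarrow> 'i set \<Rightarrow> complex mat" where
  "msum p q f I = mat p q (\<lambda>ij. \<Sum>x\<in>I. f x $$ ij)"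

definition mrank :: "complex mat \<Rightarrow> nat" where
  "mrank A = vec_space.rank (dim_row A) A"

definition PT :: "nat \<Rightarrow> nat \<Rightarrow> (nat \<Rightarrow> complex mat) \<Rightarrow> complex mat" where
  "PT n r V = msum (n*n) (n*n)
     (\<lambda>(s,a,b,c,d). (V s $$ (a,b) * mcnj (V s) $$ (c,d)) \<cdot>\<^sub>m kron (munit n a c) (munit n b d))
     ({..<r} \<times> {..<n} \<times> {..<n} \<times> {..<n} \<times> {..<n})"

definition AT :: "nat \<Rightarrow> nat \<Rightarrow> (nat \<Rightarrow> complex mat) \<Rightarrow> complex mat" where
  "AT n r V = msum (r*n) (r*n)
     (\<lambda>(s,m). kron (munit r s m)
        (msum n n (\<lambda>i. V i * mcnj (V s) * transpose_mat (V m) * madj (V i)) {..<r}))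
     ({..<r} \<times> {..<r})"

definition P1 :: "nat \<Rightarrow> complex mat \<Rightarrow> complex mat" where
  "P1 n P = kron P (1\<^sub>m n)"

definition P2 :: "nat \<Rightarrow> complex mat \<Rightarrow> complex mat" where
  "P2 n P = kron (1\<^sub>m n) P"

definition is_solution :: "nat \<Rightarrow> real \<Rightarrow> complex mat \<Rightarrow> bool" where
  "is_solution n Q P \<longleftrightarrow> P \<in> carrier_mat (n*n) (n*n) \<and> madj P = P \<and> P * P = P \<and>
     (complex_of_real Q)^2 \<cdot>\<^sub>m (P1 n P * P2 n P * P1 n P - P2 n P * P1 n P * P2 n P)
       = P1 n P - P2 n P"

definition trivial_sol :: "nat \<Rightarrow> complex mat \<Rightarrow> bool" where
  "trivial_sol n P \<longleftrightarrow> P = 0\<^sub>m (n*n) (n*n) \<or> P = kron (1\<^sub>m n) (1\<^sub>m n)"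

definition nontrivial_solution :: "nat \<Rightarrow> real \<Rightarrow> complex mat \<Rightarrow> bool" where
  "nontrivial_solution n Q P \<longleftrightarrow> is_solution n Q P \<and> \<not> trivial_sol n P"

end

theory Submission
  imports Defs
begin

context vec_space begin

lemma mulvec_in_span:
  assumes A: "A \<in> carrier_mat n k" and v: "v \<in> carrier_vec k"
  shows "A *\<^sub>v v \<in> span (set (cols A))"
proof -
  have cd: "\<forall>w\<in>set (cols A). dim_vec w = n" using A by (auto simp: cols_def)
  have "lincomb_list (\<lambda>i. v $ i) (cols A) = mat_of_cols n (cols A) *\<^sub>v vec (length (cols A)) (\<lambda>i. v $ i)"
    by (rule lincomb_list_as_mat_mult[OF cd])
  also have "\<dots> = A *\<^sub>v v"
  proof -
    have "mat_of_cols n (cols A) = A" using A mat_of_cols_cols[of A] by auto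
    moreover have "vec (length (cols A)) (\<lambda>i. v $ i) = v" using A v by auto
    ultimately show ?thesis by simp
  qed
  finally have "A *\<^sub>v v \<in> span_list (cols A)" unfolding span_list_def by (metis (mono_tags, lifting) mem_Collect_eq)
  moreover have "set (cols A) \<subseteq> carrier_vec n" using A cols_dim by blast
  ultimately show ?thesis using span_list_as_span by blast
qed

lemma rank_mult_le:
  assumes A: "A \<in> carrier_mat n k" and B: "B \<in> carrier_mat k m"
  shows "rank (A * B) \<le> rank A"
proof -
  define W where "W = span (set (cols A))"
  have cA: "set (cols A) \<subseteq> carrier_vec n" using A cols_dim by blast
  have AB: "A * B \<in> carrier_mat n m" using A B by auto
  have cAB: "set (cols (A*B)) \<subseteq> carrier_vec n" using AB cols_dim by blast
  have "set (cols (A * B)) \<subseteq> W"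
  proof
    fix x assume "x \<in> set (cols (A * B))"
    then obtain j where j: "j < m" "x = col (A*B) j" using AB
      by (metis cols_length cols_nth carrier_matD(2) in_set_conv_nth)
    then have "x = A *\<^sub>v col B j" using A B by auto
    then show "x \<in> W" unfolding W_def using mulvec_in_span[OF A, of "col B j"] B j by auto
  qed
  have sW: "subspace class_ring W V" unfolding W_def using cA span_is_subspace by auto
  then have "span (set (cols (A * B))) \<subseteq> W"
    using \<open>set (cols (A * B)) \<subseteq> W\<close> cA cAB span_is_subset subspace_def by blast
  have "subspace class_ring (span (set (cols (A * B)))) V" using cAB span_is_subspace by auto
  then have sub: "subspace class_ring (span (set (cols (A * B)))) (vs W)"
    using nested_subspaces[OF sW] \<open>span (set (cols (A * B))) \<subseteq> W\<close> by blast
  have fW: "vectorspace.fin_dim class_ring (vs W)" unfolding W_def using fin_dim_span_cols[OF A] .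
  have "vectorspace.fin_dim class_ring (span_vs (set (cols (A * B))))" using fin_dim_span_cols[OF AB] .
  then have "rank (A * B) \<le> vectorspace.dim class_ring (vs W)" unfolding rank_def
    using vectorspace.subspace_dim[OF subspace_is_vs[OF sW] sub fW] by auto
  then show ?thesis unfolding rank_def W_def .
qed

end

definition gtr :: "'a::comm_ring_1 mat \<Rightarrow> 'a" where
  "gtr A = (\<Sum>i<dim_row A. A $$ (i,i))"

lemma mtrace_gtr: "mtrace A = gtr A" unfolding mtrace_def gtr_def ..

lemma gtr_comm:
  assumes A: "A \<in> carrier_mat n m" and B: "B \<in> carrier_mat m n"
  shows "gtr (A * B) = gtr (B * A)"
proof -
  have "gtr (A * B) = (\<Sum>i<n. \<Sum>j<m. A $$ (i,j) * B $$ (j,i))"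
    unfolding gtr_def using A B
    by (auto simp: scalar_prod_def intro!: sum.cong sum.reindex_bij_witness[of _ id id])
  also have "\<dots> = (\<Sum>j<m. \<Sum>i<n. B $$ (j,i) * A $$ (i,j))"
    by (subst sum.swap) (simp add: mult.commute)
  also have "\<dots> = gtr (B * A)"
    unfolding gtr_def using A B
    by (auto simp: scalar_prod_def intro!: sum.cong sum.reindex_bij_witness[of _ id id])
  finally show ?thesis .
qed

lemma gtr_one[simp]: "gtr (1\<^sub>m k) = of_nat k"
  unfolding gtr_def by simp

lemma mtrace_comm:
  assumes A: "A \<in> carrier_mat n m" and B: "B \<in> carrier_mat m n"
  shows "mtrace (A * B) = mtrace (B * A)"
  unfolding mtrace_gtr by (rule gtr_comm[OF A B])

lemma mtrace_one[simp]: "mtrace (1\<^sub>m k) = of_nat k"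
  unfolding mtrace_def by simp

context vec_space begin

lemma rank_idem:
  assumes R: "R \<in> carrier_mat n n" and idem: "R * R = R"
  shows "of_nat (rank R) = gtr R"
proof -
  obtain S where max: "maximal S (\<lambda>T. T \<subseteq> set (cols R) \<and> lin_indpt T)"
    using maximal_exists[of "(\<lambda>T. T \<subseteq> set (cols R) \<and> lin_indpt T)" "card (set (cols R))" "{}"]
    by (meson List.finite_set card_mono empty_iff empty_subsetI finite_lin_indpt2 rev_finite_subset)
  have rk: "rank R = card S" using rank_card_indpt[OF R max] .
  have SR: "S \<subseteq> set (cols R)" and li: "lin_indpt S" using max unfolding maximal_def by auto
  have cR: "set (cols R) \<subseteq> carrier_vec n" using R cols_dim by blast
  have Sc: "S \<subseteq> carrier_vec n" using SR cR by auto
  have fS: "finite S" using SR finite_subset by blast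
  obtain xs where xs: "set xs = S" "distinct xs" using finite_distinct_list[OF fS] by blast
  define k where "k = length xs"
  have kS: "k = card S" unfolding k_def using xs distinct_card by metis
  define B where "B = mat_of_cols n xs"
  have B: "B \<in> carrier_mat n k" unfolding B_def k_def by auto
  have cB: "cols B = xs" unfolding B_def using cols_mat_of_cols xs Sc by metis
  have colB: "\<And>i. i < k \<Longrightarrow> col B i = xs ! i" using cB B
    by (metis cols_nth carrier_matD(2))
  have inspan: "col R j \<in> span S" if j: "j < n" for j
  proof (rule ccontr)
    assume ns: "col R j \<notin> span S"
    have cj: "col R j \<in> set (cols R)" using j R by (metis cols_length cols_nth carrier_matD(2) nth_mem)
    have cjc: "col R j \<in> carrier_vec n" using j R by auto
    have "col R j \<notin> S" using ns in_own_span[OF Sc] by blast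
    then have "lin_indpt (S \<union> {col R j})"
      using lin_dep_iff_in_span[OF Sc li cjc] ns by blast
    moreover have "S \<union> {col R j} \<subseteq> set (cols R)" using SR cj by auto
    ultimately have "S \<union> {col R j} = S" using max unfolding maximal_def by blast
    then show False using \<open>col R j \<notin> S\<close> by blast
  qed
  have "\<forall>j. \<exists>c. j < n \<longrightarrow> col R j = B *\<^sub>v vec k c"
  proof (intro allI impI)
    fix j
    show "\<exists>c. j < n \<longrightarrow> col R j = B *\<^sub>v vec k c"
    proof (cases "j < n")
      case True
      have "col R j \<in> span_list xs" using inspan[OF True] span_list_as_span[of xs] xs Sc by auto
      then obtain c where "col R j = lincomb_list c xs" unfolding span_list_def by auto
      also have "\<dots> = B *\<^sub>v vec k c" unfolding B_def k_def
        by (rule lincomb_list_as_mat_mult) (use xs Sc in auto)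
      finally show ?thesis by blast
    qed auto
  qed
  then obtain cf where cf: "\<And>j. j < n \<Longrightarrow> col R j = B *\<^sub>v vec k (cf j)" by metis
  define C where "C = mat k n (\<lambda>(i,j). cf j i)"
  have C: "C \<in> carrier_mat k n" unfolding C_def by auto
  have colC: "\<And>j. j < n \<Longrightarrow> col C j = vec k (cf j)" unfolding C_def by auto
  have RBC: "R = B * C"
  proof (rule mat_col_eqI)
    fix j assume "j < dim_col (B * C)"
    then have j: "j < n" using C by auto
    show "col R j = col (B * C) j" using cf[OF j] colC[OF j] col_mult2[OF B C j] by simp
  qed (use R B C in auto)
  have RB: "R * B = B"
  proof (rule mat_col_eqI)
    fix i assume "i < dim_col B"
    then have i: "i < k" using B by auto
    have "xs ! i \<in> set (cols R)" using SR xs i k_def by auto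
    then obtain j where j: "j < n" "xs ! i = col R j" using R
      by (metis cols_length cols_nth carrier_matD(2) in_set_conv_nth)
    have "col (R * B) i = R *\<^sub>v col B i" using col_mult2[OF R B i] .
    also have "\<dots> = R *\<^sub>v col R j" using colB[OF i] j by simp
    also have "\<dots> = col (R * R) j" using col_mult2[OF R R j(1)] by simp
    also have "\<dots> = col B i" using idem j(2) colB[OF i] by simp
    finally show "col (R * B) i = col B i" .
  qed (use R B in auto)
  have CB: "C * B = 1\<^sub>m k"
  proof (rule mat_col_eqI)
    fix i assume "i < dim_col (1\<^sub>m k)"
    then have i: "i < k" by auto
    have "B * (C * B) = B"
      using RB RBC assoc_mult_mat[OF B C B] by simp
    then have "B *\<^sub>v col (C * B) i = col B i"
      using col_mult2[OF B _ i, of "C * B"] C B by auto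
    also have "\<dots> = B *\<^sub>v unit_vec k i" using B i by auto
    finally have eq: "B *\<^sub>v col (C * B) i = B *\<^sub>v unit_vec k i" .
    define w where "w = col (C * B) i - unit_vec k i"
    have c1: "col (C * B) i \<in> carrier_vec k" using col_dim[of "C * B" i] C B by simp
    have wc: "w \<in> carrier_vec k" unfolding w_def using c1 unit_vec_carrier by (rule minus_carrier_vec)
    have Bw: "B *\<^sub>v w = 0\<^sub>v n" unfolding w_def
      using mult_minus_distrib_mat_vec[OF B c1 unit_vec_carrier[of k i]] eq
        minus_cancel_vec[of "B *\<^sub>v unit_vec k i" n] B by simp
    have dB: "distinct (cols B)" using cB xs(2) by simp
    have w0: "w = 0\<^sub>v k"
    proof (rule ccontr)
      assume "w \<noteq> 0\<^sub>v k"
      then have "lin_dep (set (cols B))" by (rule lin_depI[OF B wc _ Bw dB])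
      then show False using cB xs li by simp
    qed
    have "col (C * B) i = unit_vec k i"
    proof (rule eq_vecI)
      fix j assume j: "j < dim_vec (unit_vec k i)"
      have "w $ j = 0" using w0 j by simp
      then show "col (C * B) i $ j = unit_vec k i $ j" unfolding w_def using c1 j by simp
    qed (use c1 C in simp)
    then show "col (C * B) i = col (1\<^sub>m k) i" using i by simp
  qed (use C B in auto)
  have "gtr R = gtr (B * C)" using RBC by simp
  also have "\<dots> = gtr (C * B)" using gtr_comm[OF B C] .
  also have "\<dots> = of_nat k" using CB by simp
  finally show ?thesis using rk kS by simp
qed

end

lemma madj_dim[simp]: "dim_row (madj A) = dim_col A" "dim_col (madj A) = dim_row A"
  unfolding madj_def by auto

lemma madj_index[simp]: "i < dim_col A \<Longrightarrow> j < dim_row A \<Longrightarrow> madj A $$ (i,j) = cnj (A $$ (j,i))"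
  unfolding madj_def by auto

lemma madj_carrier: "A \<in> carrier_mat a b \<Longrightarrow> madj A \<in> carrier_mat b a"
  unfolding carrier_mat_def by simp

lemma madj_madj[simp]: "madj (madj A) = A"
  by (rule eq_matI) simp_all

lemma madj_mult: "dim_col A = dim_row B \<Longrightarrow> madj (A * B) = madj B * madj A"
proof (rule eq_matI)
  fix i j assume "dim_col A = dim_row B" "i < dim_row (madj B * madj A)" "j < dim_col (madj B * madj A)"
  then show "madj (A * B) $$ (i, j) = (madj B * madj A) $$ (i, j)"
    by (simp add: scalar_prod_def cnj_sum mult.commute)
qed simp_all

lemma madj_minus: "dim_row A = dim_row B \<Longrightarrow> dim_col A = dim_col B \<Longrightarrow> madj (A - B) = madj A - madj B"
  by (rule eq_matI) simp_all

lemma madj_add: "dim_row A = dim_row B \<Longrightarrow> dim_col A = dim_col B \<Longrightarrow> madj (A + B) = madj A + madj B"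
  by (rule eq_matI) simp_all

lemma madj_smult: "madj (c \<cdot>\<^sub>m A) = cnj c \<cdot>\<^sub>m madj A"
  by (rule eq_matI) simp_all

lemma madj_one[simp]: "madj (1\<^sub>m k) = 1\<^sub>m k"
  by (rule eq_matI) simp_all

lemma massoc: "dim_col A = dim_row B \<Longrightarrow> dim_col B = dim_row C \<Longrightarrow> A * B * C = A * (B * C)"
  by (rule assoc_mult_mat[of A "dim_row A" "dim_col A" B "dim_col B" C "dim_col C"]) auto

lemma mdistL_add: "dim_col A = dim_row B \<Longrightarrow> dim_row B = dim_row C \<Longrightarrow> dim_col B = dim_col C \<Longrightarrow>
   A * (B + C) = A * B + A * C"
  by (rule mult_add_distrib_mat[of A "dim_row A" "dim_col A" B "dim_col B"]) auto

lemma mdistR_add: "dim_row A = dim_row B \<Longrightarrow> dim_col A = dim_col B \<Longrightarrow> dim_col A = dim_row C \<Longrightarrow>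
   (A + B) * C = A * C + B * C"
  by (rule add_mult_distrib_mat[of A "dim_row A" "dim_col A" B C "dim_col C"]) auto

lemma mdistL_minus: "dim_col A = dim_row B \<Longrightarrow> dim_row B = dim_row C \<Longrightarrow> dim_col B = dim_col C \<Longrightarrow>
   (A :: complex mat) * (B - C) = A * B - A * C"
  by (rule mult_minus_distrib_mat[of A "dim_row A" "dim_col A" B "dim_col B"]) auto

lemma mdistR_minus: "dim_row A = dim_row B \<Longrightarrow> dim_col A = dim_col B \<Longrightarrow> dim_col A = dim_row C \<Longrightarrow>
   ((A :: complex mat) - B) * C = A * C - B * C"
  by (rule minus_mult_distrib_mat[of A "dim_row A" "dim_col A" B C "dim_col C"]) auto

lemma msmultL: "dim_col A = dim_row B \<Longrightarrow> (c \<cdot>\<^sub>m A) * B = (c::complex) \<cdot>\<^sub>m (A * B)"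
  by (rule mult_smult_assoc_mat[of A "dim_row A" "dim_col A" B "dim_col B"]) auto

lemma msmultR: "dim_col A = dim_row B \<Longrightarrow> A * (c \<cdot>\<^sub>m B) = (c::complex) \<cdot>\<^sub>m (A * B)"
  by (rule mult_smult_distrib[of A "dim_row A" "dim_col A" B "dim_col B"]) auto

lemma mtrace_add: "dim_row A = dim_row B \<Longrightarrow> dim_col A = dim_col B \<Longrightarrow> dim_row A = dim_col A \<Longrightarrow>
  mtrace (A + B) = mtrace A + mtrace B"
  unfolding mtrace_def by (auto simp: sum.distrib)

lemma mtrace_minus: "dim_row A = dim_row B \<Longrightarrow> dim_col A = dim_col B \<Longrightarrow> dim_row A = dim_col A \<Longrightarrow>
  mtrace (A - B) = mtrace A - mtrace B"
  unfolding mtrace_def by (auto simp: sum_subtractf)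

lemma mtrace_smult: "dim_row A = dim_col A \<Longrightarrow> mtrace (c \<cdot>\<^sub>m A) = c * mtrace A"
  unfolding mtrace_def by (auto simp: sum_distrib_left)

lemma mtrace_adj_self: "mtrace (madj Z * Z) = complex_of_real (\<Sum>i<dim_col Z. \<Sum>k<dim_row Z. (cmod (Z $$ (k,i)))\<^sup>2)"
proof -
  have "mtrace (madj Z * Z) = (\<Sum>i<dim_col Z. \<Sum>k<dim_row Z. cnj (Z $$ (k,i)) * Z $$ (k,i))"
    unfolding mtrace_def by (auto simp: scalar_prod_def intro!: sum.cong)
  also have "\<dots> = (\<Sum>i<dim_col Z. \<Sum>k<dim_row Z. complex_of_real ((cmod (Z $$ (k,i)))\<^sup>2))"
    by (intro sum.cong refl) (simp only: complex_norm_square mult.commute)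
  finally show ?thesis by simp
qed

lemma frob_zero: assumes "mtrace (madj Z * Z) = 0" shows "Z = 0\<^sub>m (dim_row Z) (dim_col Z)"
proof (rule eq_matI)
  fix k i assume k: "k < dim_row (0\<^sub>m (dim_row Z) (dim_col Z))" and i: "i < dim_col (0\<^sub>m (dim_row Z) (dim_col Z))"
  have s: "(\<Sum>i<dim_col Z. \<Sum>k<dim_row Z. (cmod (Z $$ (k,i)))\<^sup>2) = 0"
    using assms mtrace_adj_self[of Z] of_real_eq_0_iff by metis
  have "(\<Sum>k<dim_row Z. (cmod (Z $$ (k,i)))\<^sup>2) = 0"
    using s i by (subst (asm) sum_nonneg_eq_0_iff) (auto intro: sum_nonneg)
  then have "(cmod (Z $$ (k,i)))\<^sup>2 = 0"
    using k by (subst (asm) sum_nonneg_eq_0_iff) auto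
  then show "Z $$ (k,i) = 0\<^sub>m (dim_row Z) (dim_col Z) $$ (k,i)" using k i by simp
qed simp_all

lemma herm_sq_zero: assumes "madj Z = Z" "Z * Z = 0\<^sub>m (dim_row Z) (dim_col Z)"
  shows "Z = 0\<^sub>m (dim_row Z) (dim_col Z)"
proof (rule frob_zero)
  have sq: "dim_row Z = dim_col Z" using assms(1) madj_dim(1)[of Z] by simp
  have "mtrace (Z * Z) = 0" using assms(2) sq unfolding mtrace_def by simp
  then show "mtrace (madj Z * Z) = 0" using assms(1) by simp
qed


lemma mat_eq_entries: "A \<in> carrier_mat a b \<Longrightarrow> B \<in> carrier_mat a b \<Longrightarrow>
  (\<And>i j. i < a \<Longrightarrow> j < b \<Longrightarrow> A $$ (i,j) = B $$ (i,j)) \<Longrightarrow> A = B"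
  by (rule eq_matI) (simp_all add: carrier_matD)

locale twoproj =
  fixes M N :: nat and P1 P2 U :: "complex mat"
  assumes P1c: "P1 \<in> carrier_mat M M" and Uc: "U \<in> carrier_mat M N"
    and UU: "madj U * U = 1\<^sub>m N" and P2U: "U * madj U = P2"
    and P1h: "madj P1 = P1" and P1i: "P1 * P1 = P1" and trP1: "mtrace P1 = of_nat N"
begin

lemma P2c: "P2 \<in> carrier_mat M M"
proof -
  have "dim_row P2 = M" "dim_col P2 = M" using P2U[symmetric] Uc by simp_all
  then show ?thesis by (rule carrier_matI)
qed

lemma dims[simp]: "dim_row P1 = M" "dim_col P1 = M" "dim_row P2 = M" "dim_col P2 = M"
  "dim_row U = M" "dim_col U = N"
  using P1c P2c Uc by auto

lemma UUZ: "dim_row Z = N \<Longrightarrow> madj U * (U * Z) = Z"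
  using massoc[of "madj U" U Z] UU by simp

lemma UU'Z: "dim_row Z = M \<Longrightarrow> U * (madj U * Z) = P2 * Z"
  using massoc[of U "madj U" Z] P2U by simp

lemma UP2: "madj U * P2 = madj U"
  using P2U[symmetric] UUZ[of "madj U"] by simp

lemma P2U': "P2 * U = U"
  using P2U massoc[of U "madj U" U] UU by simp

lemma P2i: "P2 * P2 = P2"
proof -
  have "P2 * P2 = U * (madj U * P2)" using UU'Z[of P2] by simp
  also have "\<dots> = P2" using UP2 P2U by simp
  finally show ?thesis .
qed

lemma P2h: "madj P2 = P2"
  using P2U madj_mult[of U "madj U"] by simp

lemma trP2: "mtrace P2 = of_nat N"
  using P2U mtrace_comm[OF Uc madj_carrier[OF Uc]] UU by simp

lemma P1Z: "dim_row Z = M \<Longrightarrow> P1 * (P1 * Z) = P1 * Z"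
  using massoc[of P1 P1 Z] P1i by simp

lemma P2Z: "dim_row Z = M \<Longrightarrow> P2 * (P2 * Z) = P2 * Z"
  using massoc[of P2 P2 Z] P2i by simp

lemma trc: assumes "dim_row A = M" "dim_col A = M" "dim_row B = M" "dim_col B = M"
  shows "mtrace (A * B) = mtrace (B * A)"
proof -
  have a: "A \<in> carrier_mat M M" using assms(1,2) by (rule carrier_matI)
  have b: "B \<in> carrier_mat M M" using assms(3,4) by (rule carrier_matI)
  show ?thesis by (rule mtrace_comm[OF a b])
qed

definition "Amat = madj U * P1 * U"
definition "Dm = P1 - P2"

lemma Adim[simp]: "dim_row Amat = N" "dim_col Amat = N"
  unfolding Amat_def by simp_all

lemma Ddim[simp]: "dim_row Dm = M" "dim_col Dm = M"
  unfolding Dm_def by simp_all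

lemma trA: "mtrace Amat = mtrace (P1 * P2)"
proof -
  have "mtrace Amat = mtrace (madj U * (P1 * U))" unfolding Amat_def using massoc[of "madj U" P1 U] by simp
  also have "\<dots> = mtrace ((P1 * U) * madj U)"
    by (rule mtrace_comm[of _ N M]) (rule carrier_matI; simp)+
  also have "\<dots> = mtrace (P1 * P2)" using massoc[of P1 U "madj U"] P2U by simp
  finally show ?thesis .
qed

lemma DD: "Dm * Dm = P1 + P2 - P1 * P2 - P2 * P1"
proof -
  have "Dm * Dm = P1 * P1 - P2 * P1 - (P1 * P2 - P2 * P2)"
    unfolding Dm_def by (simp add: mdistL_minus mdistR_minus)
  also have "\<dots> = P1 + P2 - P1 * P2 - P2 * P1"
    by (rule mat_eq_entries[of _ M M]) ((rule carrier_matI; simp)+, simp del: index_mult_mat add: index_mult_mat(2,3) P1i P2i)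
  finally show ?thesis .
qed

lemma trDD: "mtrace (Dm * Dm) = 2 * of_nat N - 2 * mtrace (P1 * P2)"
proof -
  have "mtrace (Dm * Dm) = mtrace P1 + mtrace P2 - mtrace (P1 * P2) - mtrace (P2 * P1)"
    unfolding DD by (simp add: mtrace_add mtrace_minus)
  also have "mtrace (P2 * P1) = mtrace (P1 * P2)" by (rule trc) simp_all
  finally show ?thesis using trP1 trP2 by simp
qed

end

lemma smult_smult_mat: "a \<cdot>\<^sub>m (b \<cdot>\<^sub>m A) = (a * b :: 'a::semiring_1) \<cdot>\<^sub>m A"
  by (rule eq_matI) (simp_all add: mult.assoc)

lemma smult_one_mat: "(1::'a::semiring_1) \<cdot>\<^sub>m A = A"
  by (rule eq_matI) simp_all

lemma minus_eq_to_plus: assumes "A - B = C" "A \<in> carrier_mat a b" "B \<in> carrier_mat a b" "C \<in> carrier_mat a b"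
  shows "A = B + (C :: complex mat)"
proof (rule mat_eq_entries[of _ a b])
  fix i j assume ij: "i < a" "j < b"
  have "(A - B) $$ (i,j) = C $$ (i,j)" using assms(1) by simp
  then show "A $$ (i,j) = (B + C) $$ (i,j)" using ij assms(2-4) by (simp add: algebra_simps)
qed (use assms in auto)

context twoproj begin

lemma Dh: "madj Dm = Dm"
  unfolding Dm_def by (simp add: madj_minus P1h P2h)

lemma Hplus: assumes H: "P1 * P2 * P1 - P2 * P1 * P2 = q \<cdot>\<^sub>m Dm"
  shows "P1 * (P2 * P1) = P2 * (P1 * P2) + q \<cdot>\<^sub>m Dm"
proof -
  have "P1 * P2 * P1 = P2 * P1 * P2 + q \<cdot>\<^sub>m Dm"
    by (rule minus_eq_to_plus[OF H, of M M]) (rule carrier_matI; simp)+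
  then show ?thesis by (simp add: massoc)
qed

lemma A2: assumes H: "P1 * P2 * P1 - P2 * P1 * P2 = q \<cdot>\<^sub>m Dm"
  shows "Amat * Amat = (1 + q) \<cdot>\<^sub>m Amat - q \<cdot>\<^sub>m 1\<^sub>m N"
proof -
  have "Amat * Amat = madj U * (P1 * (U * (madj U * (P1 * U))))"
    unfolding Amat_def by (simp add: massoc)
  also have "\<dots> = madj U * (P1 * (P2 * (P1 * U)))" by (simp add: UU'Z)
  also have "\<dots> = madj U * ((P1 * (P2 * P1)) * U)" by (simp add: massoc)
  also have "\<dots> = madj U * ((P2 * (P1 * P2) + q \<cdot>\<^sub>m Dm) * U)" using Hplus[OF H] by simp
  also have "\<dots> = madj U * (P2 * (P1 * (P2 * U))) + q \<cdot>\<^sub>m (madj U * (P1 * U) - madj U * (P2 * U))"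
    unfolding Dm_def by (simp add: mdistR_add mdistR_minus mdistL_add mdistL_minus msmultL msmultR massoc)
  also have "\<dots> = madj U * (P1 * U) + q \<cdot>\<^sub>m (madj U * (P1 * U) - 1\<^sub>m N)"
  proof -
    have "madj U * (P2 * Z) = madj U * Z" if "dim_row Z = M" for Z
      using massoc[of "madj U" P2 Z] UP2 that by simp
    then show ?thesis by (simp add: P2U' UU)
  qed
  also have "\<dots> = (1 + q) \<cdot>\<^sub>m Amat - q \<cdot>\<^sub>m 1\<^sub>m N"
  proof (rule mat_eq_entries[of _ N N])
    fix i j assume ij: "i < N" "j < N"
    have "Amat = madj U * (P1 * U)" unfolding Amat_def by (simp add: massoc)
    then show "(madj U * (P1 * U) + q \<cdot>\<^sub>m (madj U * (P1 * U) - 1\<^sub>m N)) $$ (i, j) =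
         ((1 + q) \<cdot>\<^sub>m Amat - q \<cdot>\<^sub>m 1\<^sub>m N) $$ (i, j)"
      using ij by (simp del: index_mult_mat add: index_mult_mat(2,3) algebra_simps)
  qed ((rule carrier_matI; simp)+)
  finally show ?thesis .
qed

lemma DDD: assumes H: "P1 * P2 * P1 - P2 * P1 * P2 = q \<cdot>\<^sub>m Dm"
  shows "Dm * (Dm * Dm) = (1 - q) \<cdot>\<^sub>m Dm"
proof -
  have a: "P1 * (Dm * Dm) = P1 - P1 * (P2 * P1)"
  proof -
    have "P1 * (Dm * Dm) = P1 * P1 + P1 * P2 - P1 * (P1 * P2) - P1 * (P2 * P1)"
      unfolding DD by (simp add: mdistL_add mdistL_minus)
    also have "\<dots> = P1 - P1 * (P2 * P1)"
      by (rule mat_eq_entries[of _ M M]) ((rule carrier_matI; simp)+,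
          simp del: index_mult_mat add: index_mult_mat(2,3) P1i P1Z)
    finally show ?thesis .
  qed
  have b: "P2 * (Dm * Dm) = P2 - P2 * (P1 * P2)"
  proof -
    have "P2 * (Dm * Dm) = P2 * P1 + P2 * P2 - P2 * (P1 * P2) - P2 * (P2 * P1)"
      unfolding DD by (simp add: mdistL_add mdistL_minus)
    also have "\<dots> = P2 - P2 * (P1 * P2)"
      by (rule mat_eq_entries[of _ M M]) ((rule carrier_matI; simp)+,
          simp del: index_mult_mat add: index_mult_mat(2,3) P2i P2Z)
    finally show ?thesis .
  qed
  have "Dm * (Dm * Dm) = P1 * (Dm * Dm) - P2 * (Dm * Dm)"
    unfolding Dm_def by (simp add: mdistR_minus)
  also have "\<dots> = (P1 - P1 * (P2 * P1)) - (P2 - P2 * (P1 * P2))" using a b by simp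
  also have "\<dots> = (1 - q) \<cdot>\<^sub>m Dm"
  proof (rule mat_eq_entries[of _ M M])
    fix i j assume ij: "i < M" "j < M"
    have "(P1 * (P2 * P1)) $$ (i,j) = (P2 * (P1 * P2)) $$ (i,j) + q * Dm $$ (i,j)"
      using Hplus[OF H] ij by simp
    then show "(P1 - P1 * (P2 * P1) - (P2 - P2 * (P1 * P2))) $$ (i, j) = ((1 - q) \<cdot>\<^sub>m Dm) $$ (i, j)"
      using ij unfolding Dm_def by (simp del: index_mult_mat add: index_mult_mat(2,3) algebra_simps)
  qed ((rule carrier_matI; simp)+)
  finally show ?thesis .
qed

lemma rank_trace: assumes D3: "Dm * (Dm * Dm) = l \<cdot>\<^sub>m Dm"
  shows "of_nat (mrank Dm) * l = mtrace (Dm * Dm)"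
proof (cases "l = 0")
  case False
  define R where "R = (1 / l) \<cdot>\<^sub>m (Dm * Dm)"
  have Rc: "R \<in> carrier_mat M M" unfolding R_def by (rule carrier_matI; simp)
  have Dc: "Dm \<in> carrier_mat M M" by (rule carrier_matI; simp)
  have RR: "R * R = R"
  proof -
    have "R * R = (1 / l) \<cdot>\<^sub>m ((1 / l) \<cdot>\<^sub>m (Dm * (Dm * (Dm * Dm))))"
      unfolding R_def by (simp add: msmultL msmultR massoc)
    also have "\<dots> = R" unfolding R_def using D3 False
      by (simp add: msmultR smult_smult_mat)
    finally show ?thesis .
  qed
  have r1: "vec_space.rank M R \<le> vec_space.rank M Dm"
  proof -
    have "R = Dm * ((1 / l) \<cdot>\<^sub>m Dm)" unfolding R_def by (simp add: msmultR)
    moreover have "(1 / l) \<cdot>\<^sub>m Dm \<in> carrier_mat M M" by (rule carrier_matI; simp)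
    ultimately show ?thesis using vec_space.rank_mult_le[OF Dc, of "(1 / l) \<cdot>\<^sub>m Dm" M] by simp
  qed
  have r2: "vec_space.rank M Dm \<le> vec_space.rank M R"
  proof -
    have "R * Dm = Dm" unfolding R_def using D3 False
      by (simp add: msmultL massoc smult_smult_mat smult_one_mat)
    then show ?thesis using vec_space.rank_mult_le[OF Rc Dc] by simp
  qed
  have "of_nat (vec_space.rank M R) = mtrace R"
    using vec_space.rank_idem[OF Rc RR] by (simp add: mtrace_gtr)
  also have "\<dots> = (1 / l) * mtrace (Dm * Dm)" unfolding R_def by (simp add: mtrace_smult)
  finally have "of_nat (vec_space.rank M Dm) = (1 / l) * mtrace (Dm * Dm)" using r1 r2 by simp
  then show ?thesis unfolding mrank_def using False by (simp add: field_simps)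
next
  case True
  have "Dm * (Dm * Dm) = 0\<^sub>m M M" using D3 True by (intro eq_matI) simp_all
  then have "(Dm * Dm) * (Dm * Dm) = 0\<^sub>m M M"
    by (simp add: massoc)
  moreover have "madj (Dm * Dm) = Dm * Dm" by (simp add: madj_mult Dh)
  ultimately have "Dm * Dm = 0\<^sub>m M M" using herm_sq_zero[of "Dm * Dm"] by simp
  then have D0: "Dm = 0\<^sub>m M M" using herm_sq_zero[of Dm] Dh by simp
  have "mrank Dm = 0" unfolding mrank_def D0 by (simp add: vec_space.rank_0I)
  moreover have "mtrace (Dm * Dm) = 0" unfolding D0 mtrace_def by simp
  ultimately show ?thesis by simp
qed

end

context twoproj begin

lemma Apow_dim[simp]: "dim_row (Amat ^\<^sub>m m) = N" "dim_col (Amat ^\<^sub>m m) = N"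
  by (induction m) simp_all

lemma pow_rec: assumes AA: "Amat * Amat = (1 + q) \<cdot>\<^sub>m Amat - q \<cdot>\<^sub>m 1\<^sub>m N"
  shows "Amat ^\<^sub>m (Suc (Suc m)) = (1 + q) \<cdot>\<^sub>m Amat ^\<^sub>m (Suc m) - q \<cdot>\<^sub>m Amat ^\<^sub>m m"
proof -
  have "Amat ^\<^sub>m (Suc (Suc m)) = Amat ^\<^sub>m m * (Amat * Amat)" by (simp add: massoc)
  also have "\<dots> = (1 + q) \<cdot>\<^sub>m (Amat ^\<^sub>m m * Amat) - q \<cdot>\<^sub>m (Amat ^\<^sub>m m * 1\<^sub>m N)"
    unfolding AA by (simp add: mdistL_minus msmultR)
  also have "Amat ^\<^sub>m m * 1\<^sub>m N = Amat ^\<^sub>m m"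
    by (rule right_mult_one_mat) (rule carrier_matI; simp)
  finally show ?thesis by simp
qed

lemma tr_pow: assumes AA: "Amat * Amat = (1 + q) \<cdot>\<^sub>m Amat - q \<cdot>\<^sub>m 1\<^sub>m N"
  and t1: "mtrace Amat = of_nat N + (q - 1) * k"
  shows "mtrace (Amat ^\<^sub>m m) = of_nat N + (q ^ m - 1) * k"
proof -
  have "mtrace (Amat ^\<^sub>m m) = of_nat N + (q ^ m - 1) * k \<and>
        mtrace (Amat ^\<^sub>m (Suc m)) = of_nat N + (q ^ (Suc m) - 1) * k"
  proof (induction m)
    case 0
    have "Amat ^\<^sub>m 1 = Amat" by (simp add: left_mult_one_mat')
    then show ?case using t1 by simp
  next
    case (Suc m)
    have "mtrace (Amat ^\<^sub>m (Suc (Suc m))) =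
      (1 + q) * mtrace (Amat ^\<^sub>m (Suc m)) - q * mtrace (Amat ^\<^sub>m m)"
      unfolding pow_rec[OF AA] by (simp add: mtrace_minus mtrace_smult del: pow_mat.simps)
    also have "\<dots> = (1 + q) * (of_nat N + (q ^ (Suc m) - 1) * k) - q * (of_nat N + (q ^ m - 1) * k)"
      using Suc.IH by (simp only:)
    also have "\<dots> = of_nat N + (q ^ (Suc (Suc m)) - 1) * k"
      by (simp add: algebra_simps)
    finally show ?case using Suc.IH by simp
  qed
  then show ?thesis by simp
qed

theorem part_a: assumes H: "P1 * P2 * P1 - P2 * P1 * P2 = q \<cdot>\<^sub>m Dm"
  shows "mtrace (Amat ^\<^sub>m m) = of_nat N + (q ^ m - 1) * (of_nat (mrank Dm) / 2)"
proof (rule tr_pow[OF A2[OF H]])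
  have "of_nat (mrank Dm) * (1 - q) = 2 * of_nat N - 2 * mtrace (P1 * P2)"
    using rank_trace[OF DDD[OF H]] trDD by simp
  then have e: "2 * mtrace (P1 * P2) = 2 * of_nat N + (q - 1) * of_nat (mrank Dm)"
    by (simp add: algebra_simps)
  show "mtrace Amat = of_nat N + (q - 1) * (of_nat (mrank Dm) / 2)"
    using trA e by (simp add: field_simps)
qed

end

context twoproj begin

lemma trU: "dim_row Z = M \<Longrightarrow> dim_col Z = M \<Longrightarrow> mtrace (madj U * (Z * U)) = mtrace (Z * P2)"
proof -
  assume z: "dim_row Z = M" "dim_col Z = M"
  have "mtrace (madj U * (Z * U)) = mtrace ((Z * U) * madj U)"
    by (rule mtrace_comm[of _ N M]) (rule carrier_matI; simp add: z)+
  also have "\<dots> = mtrace (Z * P2)" using massoc[of Z U "madj U"] P2U z by simp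
  finally show ?thesis .
qed

lemma mUP2Z: "dim_row Z = M \<Longrightarrow> madj U * (P2 * Z) = madj U * Z"
  using massoc[of "madj U" P2 Z] UP2 by simp

lemma t1: "mtrace (Amat ^\<^sub>m 1) = mtrace (P1 * P2)"
  using trA by (simp add: left_mult_one_mat')

lemma t2: "mtrace (Amat ^\<^sub>m 2) = mtrace (P1 * (P2 * (P1 * P2)))"
proof -
  have "Amat ^\<^sub>m 2 = Amat * Amat" by (simp add: numeral_2_eq_2 left_mult_one_mat')
  also have "\<dots> = madj U * (P1 * (P2 * (P1 * U)))"
    unfolding Amat_def by (simp add: massoc UU'Z)
  also have "\<dots> = madj U * ((P1 * (P2 * P1)) * U)" by (simp add: massoc)
  finally have "mtrace (Amat ^\<^sub>m 2) = mtrace ((P1 * (P2 * P1)) * P2)" using trU by simp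
  then show ?thesis by (simp add: massoc)
qed

lemma t3: "mtrace (Amat ^\<^sub>m 3) = mtrace (P1 * (P2 * (P1 * (P2 * (P1 * P2)))))"
proof -
  have "Amat ^\<^sub>m 3 = Amat * Amat * Amat" by (simp add: numeral_3_eq_3 left_mult_one_mat')
  also have "\<dots> = madj U * (P1 * (P2 * (P1 * (P2 * (P1 * U)))))"
    unfolding Amat_def by (simp add: massoc UU'Z)
  also have "\<dots> = madj U * ((P1 * (P2 * (P1 * (P2 * P1)))) * U)" by (simp add: massoc)
  finally have "mtrace (Amat ^\<^sub>m 3) = mtrace ((P1 * (P2 * (P1 * (P2 * P1)))) * P2)" using trU by simp
  then show ?thesis by (simp add: massoc)
qed

end

context twoproj begin

lemma w_g: "mtrace (P2 * P1) = mtrace (P1 * P2)" by (rule trc) simp_all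

lemma w_b: "mtrace (P1 * (P2 * P1)) = mtrace (P1 * P2)"
proof -
  have "mtrace (P1 * (P2 * P1)) = mtrace ((P2 * P1) * P1)" by (rule trc) simp_all
  also have "\<dots> = mtrace (P2 * P1)" by (simp add: massoc P1i)
  finally show ?thesis using w_g by simp
qed

lemma w_e: "mtrace (P2 * (P1 * (P2 * P1))) = mtrace (P1 * (P2 * (P1 * P2)))"
proof -
  have "mtrace (P2 * (P1 * (P2 * P1))) = mtrace ((P1 * (P2 * P1)) * P2)" by (rule trc) simp_all
  then show ?thesis by (simp add: massoc)
qed

lemma w_a: "mtrace (P1 * (P2 * (P1 * (P2 * P1)))) = mtrace (P1 * (P2 * (P1 * P2)))"
proof -
  have "mtrace (P1 * (P2 * (P1 * (P2 * P1)))) = mtrace ((P2 * (P1 * (P2 * P1))) * P1)" by (rule trc) simp_all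
  also have "\<dots> = mtrace (P2 * (P1 * (P2 * P1)))" by (simp add: massoc P1i)
  finally show ?thesis using w_e by simp
qed

lemma w_c: "mtrace (P2 * (P1 * (P2 * (P1 * (P2 * P1))))) = mtrace (P1 * (P2 * (P1 * (P2 * (P1 * P2)))))"
proof -
  have "mtrace (P2 * (P1 * (P2 * (P1 * (P2 * P1))))) = mtrace ((P1 * (P2 * (P1 * (P2 * P1)))) * P2)" by (rule trc) simp_all
  then show ?thesis by (simp add: massoc)
qed

lemma w_d: "mtrace (P2 * (P1 * (P2 * (P1 * P2)))) = mtrace (P1 * (P2 * (P1 * P2)))"
proof -
  have "mtrace (P2 * (P1 * (P2 * (P1 * P2)))) = mtrace ((P1 * (P2 * (P1 * P2))) * P2)" by (rule trc) simp_all
  then show ?thesis by (simp add: massoc P2i)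
qed

lemma w_f: "mtrace (P2 * (P1 * P2)) = mtrace (P1 * P2)"
proof -
  have "mtrace (P2 * (P1 * P2)) = mtrace ((P1 * P2) * P2)" by (rule trc) simp_all
  then show ?thesis by (simp add: massoc P2i)
qed

lemma trEE:
  fixes q :: complex
  defines "E \<equiv> P1 * (P2 * P1) - P2 * (P1 * P2) - q \<cdot>\<^sub>m Dm"
  shows "mtrace (E * E) = 2 * mtrace (P1 * (P2 * (P1 * P2))) - 2 * mtrace (P1 * (P2 * (P1 * (P2 * (P1 * P2)))))
     - 4 * q * (mtrace (P1 * P2) - mtrace (P1 * (P2 * (P1 * P2)))) + q * q * (2 * of_nat N - 2 * mtrace (P1 * P2))"
  unfolding E_def Dm_def
  apply (simp add: mdistL_minus mdistR_minus msmultL msmultR massoc mtrace_minus mtrace_smult P1i P2i P1Z P2Z smult_smult_mat)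
  apply (simp add: w_a w_b w_c w_d w_e w_f w_g trP1 trP2)
  apply (simp add: algebra_simps)
  done

theorem part_b: assumes qr: "cnj q = q"
  and h1: "mtrace (Amat ^\<^sub>m 1) = of_nat N + (q ^ 1 - 1) * k"
  and h2: "mtrace (Amat ^\<^sub>m 2) = of_nat N + (q ^ 2 - 1) * k"
  and h3: "mtrace (Amat ^\<^sub>m 3) = of_nat N + (q ^ 3 - 1) * k"
  shows "P1 * P2 * P1 - P2 * P1 * P2 = q \<cdot>\<^sub>m Dm"
proof -
  define E where "E = P1 * (P2 * P1) - P2 * (P1 * P2) - q \<cdot>\<^sub>m Dm"
  have Edim: "dim_row E = M" "dim_col E = M" unfolding E_def by simp_all
  have Eh: "madj E = E" unfolding E_def
    by (simp add: madj_mult madj_minus madj_smult P1h P2h Dh qr massoc)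
  have e1: "mtrace (P1 * P2) = of_nat N + (q - 1) * k" using h1 t1 by simp
  have e2: "mtrace (P1 * (P2 * (P1 * P2))) = of_nat N + (q ^ 2 - 1) * k" using h2 t2 by simp
  have e3: "mtrace (P1 * (P2 * (P1 * (P2 * (P1 * P2))))) = of_nat N + (q ^ 3 - 1) * k" using h3 t3 by simp
  have "mtrace (E * E) = 0"
    unfolding E_def trEE e3 e2 e1
    by (simp add: algebra_simps power2_eq_square power3_eq_cube)
  then have "E = 0\<^sub>m M M" using frob_zero[of E] Eh Edim by simp
  show ?thesis
  proof (rule mat_eq_entries[of _ M M])
    fix i j assume ij: "i < M" "j < M"
    have "E $$ (i,j) = 0" using \<open>E = 0\<^sub>m M M\<close> ij by simp
    then show "(P1 * P2 * P1 - P2 * P1 * P2) $$ (i, j) = (q \<cdot>\<^sub>m Dm) $$ (i, j)"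
      unfolding E_def using ij by (simp del: index_mult_mat add: index_mult_mat(2,3) massoc)
  qed ((rule carrier_matI; simp)+)
qed

end

lemma split_sum: fixes f :: "nat \<Rightarrow> 'a::comm_monoid_add"
  shows "(\<Sum>i<a*b. f i) = (\<Sum>x<a. \<Sum>y<b. f (x*b + y))"
proof -
  have "(\<Sum>i<a*b. f i) = (\<Sum>(x,y)\<in>{..<a}\<times>{..<b}. f (x*b + y))"
  proof (rule sum.reindex_bij_witness[of _ "\<lambda>(x,y). x*b + y" "\<lambda>i. (i div b, i mod b)"])
    fix i assume i: "i \<in> {..<a*b}"
    then have b: "b > 0" by (cases "b = 0") auto
    show "(case (i div b, i mod b) of (x, y) \<Rightarrow> x * b + y) = i" by simp
    show "(i div b, i mod b) \<in> {..<a} \<times> {..<b}" using i b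
      by (auto simp: less_mult_imp_div_less)
    show "(case (i div b, i mod b) of (x, y) \<Rightarrow> f (x * b + y)) = f i" by simp
  next
    fix p assume p: "p \<in> {..<a} \<times> {..<b}"
    obtain x y where xy: "p = (x,y)" "x < a" "y < b" using p by auto
    show "((case p of (x, y) \<Rightarrow> x * b + y) div b, (case p of (x, y) \<Rightarrow> x * b + y) mod b) = p"
      using xy by simp
    have "x * b + y < (x + 1) * b" using xy by simp
    also have "\<dots> \<le> a * b" using xy by (intro mult_right_mono) auto
    finally show "(case p of (x, y) \<Rightarrow> x * b + y) \<in> {..<a * b}" using xy by simp
  qed
  also have "\<dots> = (\<Sum>x<a. \<Sum>y<b. f (x*b + y))" by (rule sum.cartesian_product[symmetric])
  finally show ?thesis .
qed

lemma divmod_lt: fixes i a b :: nat assumes "i < a * b" shows "i div b < a" "i mod b < b"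
proof -
  have b: "b > 0" using assms by (cases b) auto
  show "i div b < a" using assms by (simp add: less_mult_imp_div_less)
  show "i mod b < b" using b by simp
qed

lemma kron_dim[simp]: "dim_row (kron A B) = dim_row A * dim_row B" "dim_col (kron A B) = dim_col A * dim_col B"
  unfolding kron_def by simp_all

lemma kron_index[simp]: "i < dim_row A * dim_row B \<Longrightarrow> j < dim_col A * dim_col B \<Longrightarrow>
  kron A B $$ (i,j) = A $$ (i div dim_row B, j div dim_col B) * B $$ (i mod dim_row B, j mod dim_col B)"
  unfolding kron_def by simp

lemma kron_mult: assumes "dim_col A = dim_row C" "dim_col B = dim_row D"
  shows "kron A B * kron C D = kron (A * C) (B * D)"
proof (rule eq_matI)
  fix i j assume i: "i < dim_row (kron (A * C) (B * D))" and j: "j < dim_col (kron (A * C) (B * D))"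
  have i': "i < dim_row A * dim_row B" and j': "j < dim_col C * dim_col D" using i j by simp_all
  have "(kron A B * kron C D) $$ (i,j) = (\<Sum>l<dim_col A * dim_col B. kron A B $$ (i,l) * kron C D $$ (l,j))"
    using i' j' assms by (simp add: scalar_prod_def atLeast0LessThan del: kron_index)
  also have "\<dots> = (\<Sum>p<dim_col A. \<Sum>t<dim_col B. kron A B $$ (i, p * dim_col B + t) * kron C D $$ (p * dim_col B + t, j))"
    by (rule split_sum)
  also have "\<dots> = (\<Sum>p<dim_col A. \<Sum>t<dim_col B.
      (A $$ (i div dim_row B, p) * C $$ (p, j div dim_col D)) * (B $$ (i mod dim_row B, t) * D $$ (t, j mod dim_col D)))"
  proof (intro sum.cong refl)
    fix p t assume p: "p \<in> {..<dim_col A}" and t: "t \<in> {..<dim_col B}"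
    have lt: "p * dim_col B + t < dim_col A * dim_col B"
    proof -
      have "p * dim_col B + t < (p + 1) * dim_col B" using t by simp
      also have "\<dots> \<le> dim_col A * dim_col B" using p by (intro mult_right_mono) auto
      finally show ?thesis .
    qed
    show "kron A B $$ (i, p * dim_col B + t) * kron C D $$ (p * dim_col B + t, j) =
      (A $$ (i div dim_row B, p) * C $$ (p, j div dim_col D)) * (B $$ (i mod dim_row B, t) * D $$ (t, j mod dim_col D))"
      using i' j' lt t assms by (simp add: algebra_simps)
  qed
  also have "\<dots> = (\<Sum>p<dim_col A. A $$ (i div dim_row B, p) * C $$ (p, j div dim_col D)) *
      (\<Sum>t<dim_col B. B $$ (i mod dim_row B, t) * D $$ (t, j mod dim_col D))"
    by (simp add: sum_product)
  also have "\<dots> = kron (A * C) (B * D) $$ (i, j)"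
    using i' j' assms divmod_lt[OF i'] divmod_lt[OF j'] by (simp add: scalar_prod_def atLeast0LessThan)
  finally show "(kron A B * kron C D) $$ (i,j) = kron (A * C) (B * D) $$ (i, j)" .
qed simp_all

lemma madj_kron: "madj (kron A B) = kron (madj A) (madj B)"
proof (rule eq_matI)
  fix i j assume i: "i < dim_row (kron (madj A) (madj B))" and j: "j < dim_col (kron (madj A) (madj B))"
  have i': "i < dim_col A * dim_col B" and j': "j < dim_row A * dim_row B" using i j by simp_all
  show "madj (kron A B) $$ (i, j) = kron (madj A) (madj B) $$ (i, j)"
    using i' j' divmod_lt[OF i'] divmod_lt[OF j'] by simp
qed simp_all

lemma kron_one: "kron (1\<^sub>m a) (1\<^sub>m b) = 1\<^sub>m (a * b)"
proof (rule eq_matI)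
  fix i j assume i: "i < dim_row (1\<^sub>m (a * b))" and j: "j < dim_col (1\<^sub>m (a * b))"
  have i': "i < a * b" and j': "j < a * b" using i j by simp_all
  have "(i div b = j div b \<and> i mod b = j mod b) = (i = j)"
    by (metis div_mult_mod_eq)
  then show "kron (1\<^sub>m a) (1\<^sub>m b) $$ (i, j) = 1\<^sub>m (a * b) $$ (i, j)"
    using i' j' divmod_lt[OF i'] divmod_lt[OF j'] by auto
qed simp_all


lemma munit_dim[simp]: "dim_row (munit p a b) = p" "dim_col (munit p a b) = p"
  unfolding munit_def by simp_all

lemma munit_index[simp]: "i < p \<Longrightarrow> j < p \<Longrightarrow> munit p a b $$ (i,j) = (if i = a \<and> j = b then 1 else 0)"
  unfolding munit_def by simp

lemma mcnj_dim[simp]: "dim_row (mcnj A) = dim_row A" "dim_col (mcnj A) = dim_col A"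
  unfolding mcnj_def by simp_all

lemma mcnj_index[simp]: "i < dim_row A \<Longrightarrow> j < dim_col A \<Longrightarrow> mcnj A $$ (i,j) = cnj (A $$ (i,j))"
  unfolding mcnj_def by simp

lemma msum_dim[simp]: "dim_row (msum p q f I) = p" "dim_col (msum p q f I) = q"
  unfolding msum_def by simp_all

lemma msum_index[simp]: "i < p \<Longrightarrow> j < q \<Longrightarrow> msum p q f I $$ (i,j) = (\<Sum>x\<in>I. f x $$ (i,j))"
  unfolding msum_def by simp

lemma divmod_simps[simp]: fixes x y n :: nat assumes "y < n"
  shows "(x * n + y) div n = x" "(x * n + y) mod n = y"
  using assms by simp_all

lemma sum_delta_prod: fixes h :: "'b \<Rightarrow> 'c::comm_monoid_add"
  assumes "finite S" "finite T" "t0 \<in> T"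
  shows "(\<Sum>x\<in>S \<times> T. (if snd x = t0 then h (fst x) else 0)) = (\<Sum>s\<in>S. h s)"
proof -
  have "(\<Sum>x\<in>S \<times> T. (if snd x = t0 then h (fst x) else 0)) = (\<Sum>s\<in>S. \<Sum>t\<in>T. (if t = t0 then h s else 0))"
    by (subst sum.cartesian_product) (simp add: case_prod_beta)
  also have "\<dots> = (\<Sum>s\<in>S. h s)" using assms by simp
  finally show ?thesis .
qed

locale conc =
  fixes n r :: nat and V :: "nat \<Rightarrow> complex mat"
  assumes n2: "n \<ge> 2" and r1: "r \<ge> 1"
    and Vc: "\<And>s. s < r \<Longrightarrow> V s \<in> carrier_mat n n"
    and orth: "\<And>s m. s < r \<Longrightarrow> m < r \<Longrightarrow> mtrace (madj (V s) * V m) = (if s = m then 1 else 0)"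
begin

lemma npos: "n > 0" using n2 by simp

lemma Vdim[simp]: "s < r \<Longrightarrow> dim_row (V s) = n" "s < r \<Longrightarrow> dim_col (V s) = n"
  using Vc by auto

lemma PT_dim[simp]: "dim_row (PT n r V) = n * n" "dim_col (PT n r V) = n * n"
  unfolding PT_def by simp_all

lemma PT_entry: assumes k: "k < n * n" and k': "k' < n * n"
  shows "PT n r V $$ (k,k') = (\<Sum>s<r. V s $$ (k div n, k mod n) * cnj (V s $$ (k' div n, k' mod n)))"
proof -
  define T where "T = {..<n} \<times> {..<n} \<times> {..<n} \<times> ({..<n} :: nat set)"
  define t0 where "t0 = (k div n, k mod n, k' div n, k' mod n)"
  have t0T: "t0 \<in> T" unfolding T_def t0_def using divmod_lt[OF k] divmod_lt[OF k'] by simp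
  have "PT n r V $$ (k,k') = (\<Sum>x\<in>{..<r} \<times> T.
     ((\<lambda>(s,a,b,c,d). (V s $$ (a,b) * mcnj (V s) $$ (c,d)) \<cdot>\<^sub>m kron (munit n a c) (munit n b d)) x) $$ (k,k'))"
    unfolding PT_def T_def using k k' by simp
  also have "\<dots> = (\<Sum>x\<in>{..<r} \<times> T. (if snd x = t0 then
        V (fst x) $$ (k div n, k mod n) * cnj (V (fst x) $$ (k' div n, k' mod n)) else 0))"
  proof (rule sum.cong[OF refl])
    fix x assume x: "x \<in> {..<r} \<times> T"
    obtain s a b c d where xe: "x = (s,a,b,c,d)" by (cases x) auto
    have s: "s < r" and abcd: "a < n" "b < n" "c < n" "d < n" using x xe unfolding T_def by auto
    show "((\<lambda>(s,a,b,c,d). (V s $$ (a,b) * mcnj (V s) $$ (c,d)) \<cdot>\<^sub>m kron (munit n a c) (munit n b d)) x) $$ (k,k') =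
      (if snd x = t0 then V (fst x) $$ (k div n, k mod n) * cnj (V (fst x) $$ (k' div n, k' mod n)) else 0)"
      using k k' s abcd divmod_lt[OF k] divmod_lt[OF k'] unfolding xe t0_def by auto
  qed
  also have "\<dots> = (\<Sum>s<r. V s $$ (k div n, k mod n) * cnj (V s $$ (k' div n, k' mod n)))"
    by (rule sum_delta_prod[of _ _ _ "\<lambda>s. V s $$ (k div n, k mod n) * cnj (V s $$ (k' div n, k' mod n))"])
       (use t0T T_def in auto)
  finally show ?thesis .
qed

definition "V0 = mat (n*n) r (\<lambda>(k,s). V s $$ (k div n, k mod n))"

lemma V0_dim[simp]: "dim_row V0 = n * n" "dim_col V0 = r"
  unfolding V0_def by simp_all

lemma V0_index[simp]: "k < n * n \<Longrightarrow> s < r \<Longrightarrow> V0 $$ (k,s) = V s $$ (k div n, k mod n)"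
  unfolding V0_def by simp

lemma PT_V0: "PT n r V = V0 * madj V0"
  by (rule eq_matI) (simp_all add: PT_entry scalar_prod_def atLeast0LessThan)

lemma V0_orth: "madj V0 * V0 = 1\<^sub>m r"
proof (rule eq_matI)
  fix s t assume s: "s < dim_row (1\<^sub>m r)" and t: "t < dim_col (1\<^sub>m r)"
  have "(madj V0 * V0) $$ (s,t) = (\<Sum>k<n*n. cnj (V s $$ (k div n, k mod n)) * V t $$ (k div n, k mod n))"
    using s t by (simp add: scalar_prod_def atLeast0LessThan)
  also have "\<dots> = (\<Sum>a<n. \<Sum>b<n. cnj (V s $$ (a, b)) * V t $$ (a, b))"
    by (subst split_sum) simp
  also have "\<dots> = (\<Sum>b<n. \<Sum>a<n. cnj (V s $$ (a, b)) * V t $$ (a, b))"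
    by (rule sum.swap)
  also have "\<dots> = mtrace (madj (V s) * V t)"
    unfolding mtrace_def using s t by (simp add: scalar_prod_def atLeast0LessThan)
  also have "\<dots> = 1\<^sub>m r $$ (s,t)" using orth s t by simp
  finally show "(madj V0 * V0) $$ (s,t) = 1\<^sub>m r $$ (s,t)" .
qed simp_all

end

lemma madj_mcnj: "madj (mcnj A) = transpose_mat A"
  by (rule eq_matI) simp_all

lemma divmod_nn[simp]: fixes x a b n :: nat assumes "a < n" "b < n"
  shows "((x * n + a) * n + b) div (n * n) = x" "((x * n + a) * n + b) mod (n * n) = a * n + b"
proof -
  have e: "(x * n + a) * n + b = x * (n * n) + (a * n + b)" by (simp add: algebra_simps)
  have lt: "a * n + b < n * n"
  proof -
    have "a * n + b < (a + 1) * n" using assms by simp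
    also have "\<dots> \<le> n * n" using assms by (intro mult_right_mono) auto
    finally show ?thesis .
  qed
  show "((x * n + a) * n + b) div (n * n) = x" unfolding e using lt by simp
  show "((x * n + a) * n + b) mod (n * n) = a * n + b" unfolding e using lt by simp
qed

lemma sum_delta2: fixes A B :: "nat \<Rightarrow> complex" assumes "x < n"
  shows "(\<Sum>y<n. (if x = y then A y else 0) * cnj (if x' = y then B y else 0)) = (if x = x' then A x * cnj (B x) else 0)"
proof -
  have "(\<Sum>y<n. (if x = y then A y else 0) * cnj (if x' = y then B y else 0)) =
        (\<Sum>y<n. if y = x then (if x = x' then A x * cnj (B x) else 0) else 0)"
    by (rule sum.cong) auto
  also have "\<dots> = (if x = x' then A x * cnj (B x) else 0)" using assms by simp
  finally show ?thesis .
qed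

lemma eq_divmod: fixes j j' n :: nat shows "(j = j') = (j div n = j' div n \<and> j mod n = j' mod n)"
  by (metis div_mult_mod_eq)

context conc begin

definition "W = kron V0 (1\<^sub>m n)"

definition "U = mat (n*n*n) (r*n) (\<lambda>(i,j). if i div (n*n) = j mod n
     then V (j div n) $$ ((i mod (n*n)) div n, (i mod (n*n)) mod n) else 0)"

definition "G = mat (r*n) (r*n) (\<lambda>(j,l). (V (l div n) * mcnj (V (j div n))) $$ (j mod n, l mod n))"

lemma W_dim[simp]: "dim_row W = n * n * n" "dim_col W = r * n"
  unfolding W_def by simp_all

lemma U_dim[simp]: "dim_row U = n * n * n" "dim_col U = r * n"
  unfolding U_def by simp_all

lemma G_dim[simp]: "dim_row G = r * n" "dim_col G = r * n"
  unfolding G_def by simp_all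

lemma P1_W: "P1 n (PT n r V) = W * madj W"
  unfolding P1_def W_def PT_V0 madj_kron madj_one by (subst kron_mult) simp_all

lemma W_orth: "madj W * W = 1\<^sub>m (r * n)"
  unfolding W_def madj_kron madj_one by (subst kron_mult) (simp_all add: V0_orth kron_one)

lemma U_index[simp]: "i < n * n * n \<Longrightarrow> j < r * n \<Longrightarrow> U $$ (i,j) = (if i div (n*n) = j mod n
     then V (j div n) $$ ((i mod (n*n)) div n, (i mod (n*n)) mod n) else 0)"
  unfolding U_def by simp

lemma P2_U: "P2 n (PT n r V) = U * madj U"
proof (rule eq_matI)
  fix i i' assume i: "i < dim_row (U * madj U)" and i': "i' < dim_col (U * madj U)"
  have ii: "i < n * n * n" "i' < n * n * n" using i i' by simp_all
  then have ii2: "i < n * (n * n)" "i' < n * (n * n)" by (simp_all add: mult.assoc)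
  have x: "i div (n*n) < n" "i' div (n*n) < n" using divmod_lt[OF ii2(1)] divmod_lt[OF ii2(2)] by simp_all
  have km: "i mod (n*n) < n * n" "i' mod (n*n) < n * n" using divmod_lt[OF ii2(1)] divmod_lt[OF ii2(2)] by simp_all
  have "(U * madj U) $$ (i,i') = (\<Sum>j<r*n. U $$ (i,j) * cnj (U $$ (i',j)))"
    using ii by (simp add: scalar_prod_def atLeast0LessThan)
  also have "\<dots> = (\<Sum>s<r. \<Sum>y<n. U $$ (i, s*n+y) * cnj (U $$ (i', s*n+y)))"
    by (rule split_sum)
  also have "\<dots> = (\<Sum>s<r. \<Sum>y<n. (if i div (n*n) = y then V s $$ ((i mod (n*n)) div n, (i mod (n*n)) mod n) else 0) *
       cnj (if i' div (n*n) = y then V s $$ ((i' mod (n*n)) div n, (i' mod (n*n)) mod n) else 0))"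
  proof (intro sum.cong refl)
    fix s y assume s: "s \<in> {..<r}" and y: "y \<in> {..<n}"
    have "s * n + y < r * n"
    proof -
      have "s * n + y < (s + 1) * n" using y by simp
      also have "\<dots> \<le> r * n" using s by (intro mult_right_mono) auto
      finally show ?thesis .
    qed
    then show "U $$ (i, s*n+y) * cnj (U $$ (i', s*n+y)) = (if i div (n*n) = y then V s $$ ((i mod (n*n)) div n, (i mod (n*n)) mod n) else 0) *
       cnj (if i' div (n*n) = y then V s $$ ((i' mod (n*n)) div n, (i' mod (n*n)) mod n) else 0)"
      using ii y by simp
  qed
  also have "\<dots> = (\<Sum>s<r. if i div (n*n) = i' div (n*n) then V s $$ ((i mod (n*n)) div n, (i mod (n*n)) mod n) *
       cnj (V s $$ ((i' mod (n*n)) div n, (i' mod (n*n)) mod n)) else 0)"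
    using x by (simp add: sum_delta2)
  also have "\<dots> = P2 n (PT n r V) $$ (i,i')"
    unfolding P2_def using ii2 x km by (simp add: PT_entry)
  finally show "P2 n (PT n r V) $$ (i,i') = (U * madj U) $$ (i,i')" by simp
qed (simp_all add: P2_def mult.assoc)

lemma U_orth: "madj U * U = 1\<^sub>m (r * n)"
proof (rule eq_matI)
  fix j j' assume j: "j < dim_row (1\<^sub>m (r * n))" and j': "j' < dim_col (1\<^sub>m (r * n))"
  have jj: "j < r * n" "j' < r * n" using j j' by simp_all
  have s: "j div n < r" "j' div n < r" and y: "j mod n < n" "j' mod n < n"
    using divmod_lt[OF jj(1)] divmod_lt[OF jj(2)] by simp_all
  have "(madj U * U) $$ (j,j') = (\<Sum>i<n*n*n. cnj (U $$ (i,j)) * U $$ (i,j'))"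
    using jj by (simp add: scalar_prod_def atLeast0LessThan)
  also have "\<dots> = (\<Sum>i<n*(n*n). cnj (U $$ (i,j)) * U $$ (i,j'))" by (simp add: mult.assoc)
  also have "\<dots> = (\<Sum>x<n. \<Sum>k<n*n. cnj (U $$ (x*(n*n)+k,j)) * U $$ (x*(n*n)+k,j'))"
    by (rule split_sum)
  also have "\<dots> = (\<Sum>x<n. \<Sum>k<n*n. (if x = j mod n then cnj (V0 $$ (k, j div n)) else 0) *
        (if x = j' mod n then V0 $$ (k, j' div n) else 0))"
  proof (intro sum.cong refl)
    fix x k assume x: "x \<in> {..<n}" and k: "k \<in> {..<n*n}"
    have lt: "x * (n*n) + k < n * n * n"
    proof -
      have "x * (n*n) + k < (x + 1) * (n*n)" using k by simp
      also have "\<dots> \<le> n * (n*n)" using x by (intro mult_right_mono) auto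
      finally show ?thesis by (simp add: mult.assoc)
    qed
    show "cnj (U $$ (x*(n*n)+k,j)) * U $$ (x*(n*n)+k,j') = (if x = j mod n then cnj (V0 $$ (k, j div n)) else 0) *
        (if x = j' mod n then V0 $$ (k, j' div n) else 0)"
      using lt jj k s by simp
  qed
  also have "\<dots> = (\<Sum>x<n. if x = j mod n then (if j mod n = j' mod n then
        (\<Sum>k<n*n. cnj (V0 $$ (k, j div n)) * V0 $$ (k, j' div n)) else 0) else 0)"
    by (intro sum.cong refl) (auto simp: sum_distrib_left)
  also have "\<dots> = (if j mod n = j' mod n then (madj V0 * V0) $$ (j div n, j' div n) else 0)"
    using y s by (simp add: scalar_prod_def atLeast0LessThan)
  also have "\<dots> = 1\<^sub>m (r * n) $$ (j,j')"
    unfolding V0_orth using s jj eq_divmod[of j j' n] by auto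
  finally show "(madj U * U) $$ (j,j') = 1\<^sub>m (r * n) $$ (j,j')" .
qed simp_all

lemma G_index[simp]: "j < r * n \<Longrightarrow> l < r * n \<Longrightarrow>
  G $$ (j,l) = (V (l div n) * mcnj (V (j div n))) $$ (j mod n, l mod n)"
  unfolding G_def by simp

lemma UW_G: "madj U * W = G"
proof (rule eq_matI)
  fix j l assume j: "j < dim_row G" and l: "l < dim_col G"
  have jl: "j < r * n" "l < r * n" using j l by simp_all
  have s: "j div n < r" "l div n < r" and y: "j mod n < n" "l mod n < n"
    using divmod_lt[OF jl(1)] divmod_lt[OF jl(2)] by simp_all
  have "(madj U * W) $$ (j,l) = (\<Sum>i<n*n*n. cnj (U $$ (i,j)) * W $$ (i,l))"
    using jl by (simp add: scalar_prod_def atLeast0LessThan)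
  also have "\<dots> = (\<Sum>k<n*n. \<Sum>b<n. cnj (U $$ (k*n+b,j)) * W $$ (k*n+b,l))"
    by (rule split_sum)
  also have "\<dots> = (\<Sum>x<n. \<Sum>a<n. \<Sum>b<n. cnj (U $$ ((x*n+a)*n+b,j)) * W $$ ((x*n+a)*n+b,l))"
    by (rule split_sum)
  also have "\<dots> = (\<Sum>x<n. \<Sum>a<n. \<Sum>b<n. (if x = j mod n then cnj (V (j div n) $$ (a, b)) else 0) *
        (V (l div n) $$ (x, a) * (if b = l mod n then 1 else 0)))"
  proof (intro sum.cong refl)
    fix x a b assume x: "x \<in> {..<n}" and a: "a \<in> {..<n}" and b: "b \<in> {..<n}"
    have lt1: "x * n + a < n * n"
    proof -
      have "x * n + a < (x + 1) * n" using a by simp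
      also have "\<dots> \<le> n * n" using x by (intro mult_right_mono) auto
      finally show ?thesis .
    qed
    have lt: "(x*n+a)*n+b < n * n * n"
    proof -
      have "(x*n+a)*n+b < (x*n+a + 1) * n" using b by simp
      also have "\<dots> \<le> n * n * n" using lt1 by (intro mult_right_mono) auto
      finally show ?thesis .
    qed
    show "cnj (U $$ ((x*n+a)*n+b,j)) * W $$ ((x*n+a)*n+b,l) = (if x = j mod n then cnj (V (j div n) $$ (a, b)) else 0) *
        (V (l div n) $$ (x, a) * (if b = l mod n then 1 else 0))"
      using lt lt1 jl a b s y unfolding W_def by (simp add: npos)
  qed
  also have "\<dots> = (\<Sum>a<n. V (l div n) $$ (j mod n, a) * cnj (V (j div n) $$ (a, l mod n)))"
  proof -
    have "(\<Sum>x<n. \<Sum>a<n. \<Sum>b<n. (if x = j mod n then cnj (V (j div n) $$ (a, b)) else 0) *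
        (V (l div n) $$ (x, a) * (if b = l mod n then 1 else 0))) =
        (\<Sum>x<n. if x = j mod n then (\<Sum>a<n. cnj (V (j div n) $$ (a, l mod n)) * V (l div n) $$ (x, a)) else 0)"
      using y by (intro sum.cong refl) (auto simp: if_distrib[of "\<lambda>z. _ * z"] sum.delta' cong: if_cong)
    also have "\<dots> = (\<Sum>a<n. V (l div n) $$ (j mod n, a) * cnj (V (j div n) $$ (a, l mod n)))"
      using y by (simp add: mult.commute)
    finally show ?thesis .
  qed
  also have "\<dots> = G $$ (j,l)" using jl s y by (simp add: scalar_prod_def atLeast0LessThan)
  finally show "(madj U * W) $$ (j,l) = G $$ (j,l)" .
qed simp_all

lemma AT_dim[simp]: "dim_row (AT n r V) = r * n" "dim_col (AT n r V) = r * n"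
  unfolding AT_def by simp_all

lemma AT_G: "AT n r V = G * madj G"
proof (rule eq_matI)
  fix j j' assume j: "j < dim_row (G * madj G)" and j': "j' < dim_col (G * madj G)"
  have jj: "j < r * n" "j' < r * n" using j j' by simp_all
  have s: "j div n < r" "j' div n < r" and y: "j mod n < n" "j' mod n < n"
    using divmod_lt[OF jj(1)] divmod_lt[OF jj(2)] by simp_all
  define F where "F = (\<lambda>i s. V i * mcnj (V s))"
  have Fd: "\<And>i s. i < r \<Longrightarrow> s < r \<Longrightarrow> dim_row (F i s) = n \<and> dim_col (F i s) = n"
    unfolding F_def by simp
  have "(G * madj G) $$ (j,j') = (\<Sum>l<r*n. G $$ (j,l) * cnj (G $$ (j',l)))"
    using jj by (simp add: scalar_prod_def atLeast0LessThan)
  also have "\<dots> = (\<Sum>i<r. \<Sum>z<n. G $$ (j,i*n+z) * cnj (G $$ (j',i*n+z)))"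
    by (rule split_sum)
  also have "\<dots> = (\<Sum>i<r. (F i (j div n) * madj (F i (j' div n))) $$ (j mod n, j' mod n))"
  proof (intro sum.cong refl)
    fix i assume i: "i \<in> {..<r}"
    have "(\<Sum>z<n. G $$ (j,i*n+z) * cnj (G $$ (j',i*n+z))) =
          (\<Sum>z<n. F i (j div n) $$ (j mod n, z) * cnj (F i (j' div n) $$ (j' mod n, z)))"
    proof (intro sum.cong refl)
      fix z assume z: "z \<in> {..<n}"
      have "i * n + z < r * n"
      proof -
        have "i * n + z < (i + 1) * n" using z by simp
        also have "\<dots> \<le> r * n" using i by (intro mult_right_mono) auto
        finally show ?thesis .
      qed
      then show "G $$ (j,i*n+z) * cnj (G $$ (j',i*n+z)) =
          F i (j div n) $$ (j mod n, z) * cnj (F i (j' div n) $$ (j' mod n, z))"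
        using jj z unfolding F_def by simp
    qed
    also have "\<dots> = (F i (j div n) * madj (F i (j' div n))) $$ (j mod n, j' mod n)"
      using Fd[of i "j div n"] Fd[of i "j' div n"] i s y by (simp add: scalar_prod_def atLeast0LessThan)
    finally show "(\<Sum>z<n. G $$ (j,i*n+z) * cnj (G $$ (j',i*n+z))) =
       (F i (j div n) * madj (F i (j' div n))) $$ (j mod n, j' mod n)" .
  qed
  also have "\<dots> = (\<Sum>i<r. (V i * mcnj (V (j div n)) * transpose_mat (V (j' div n)) * madj (V i)) $$ (j mod n, j' mod n))"
  proof (intro sum.cong refl)
    fix i assume i: "i \<in> {..<r}"
    have "F i (j div n) * madj (F i (j' div n)) = V i * mcnj (V (j div n)) * (transpose_mat (V (j' div n)) * madj (V i))"
      unfolding F_def using i s by (simp add: madj_mult madj_mcnj)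
    also have "\<dots> = V i * mcnj (V (j div n)) * transpose_mat (V (j' div n)) * madj (V i)"
      using i s by (simp add: massoc)
    finally show "(F i (j div n) * madj (F i (j' div n))) $$ (j mod n, j' mod n) =
      (V i * mcnj (V (j div n)) * transpose_mat (V (j' div n)) * madj (V i)) $$ (j mod n, j' mod n)" by simp
  qed
  also have "\<dots> = AT n r V $$ (j,j')"
  proof -
    define B where "B = (\<lambda>s m. msum n n (\<lambda>i. V i * mcnj (V s) * transpose_mat (V m) * madj (V i)) {..<r})"
    have "AT n r V $$ (j,j') = (\<Sum>x\<in>{..<r} \<times> {..<r}. (case x of (s,m) \<Rightarrow> kron (munit r s m) (B s m)) $$ (j,j'))"
      unfolding AT_def B_def using jj by simp
    also have "\<dots> = (\<Sum>x\<in>{..<r} \<times> {..<r}. if (j div n, j' div n) = x then B (fst x) (snd x) $$ (j mod n, j' mod n) else 0)"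
    proof (intro sum.cong refl)
      fix x assume x: "x \<in> {..<r} \<times> {..<r}"
      obtain s0 m0 where xe: "x = (s0, m0)" by (cases x)
      show "(case x of (s,m) \<Rightarrow> kron (munit r s m) (B s m)) $$ (j,j') =
        (if (j div n, j' div n) = x then B (fst x) (snd x) $$ (j mod n, j' mod n) else 0)"
        using jj s unfolding xe B_def by auto
    qed
    also have "\<dots> = B (j div n) (j' div n) $$ (j mod n, j' mod n)"
      using s by (simp add: sum.delta)
    also have "\<dots> = (\<Sum>i<r. (V i * mcnj (V (j div n)) * transpose_mat (V (j' div n)) * madj (V i)) $$ (j mod n, j' mod n))"
      unfolding B_def using y by simp
    finally show ?thesis by simp
  qed
  finally show "AT n r V $$ (j,j') = (G * madj G) $$ (j,j')" by simp
qed simp_all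

end

context conc begin

lemma P1c': "P1 n (PT n r V) \<in> carrier_mat (n*n*n) (n*n*n)"
  unfolding P1_def by (rule carrier_matI) simp_all

lemma P1h': "madj (P1 n (PT n r V)) = P1 n (PT n r V)"
  unfolding P1_W by (simp add: madj_mult)

lemma P1i': "P1 n (PT n r V) * P1 n (PT n r V) = P1 n (PT n r V)"
proof -
  have "W * madj W * (W * madj W) = W * (madj W * W * madj W)" by (simp add: massoc)
  also have "\<dots> = W * madj W"
  proof -
    have "1\<^sub>m (r * n) * madj W = madj W"
      by (rule left_mult_one_mat[of _ "r * n" "n * n * n"]) (rule carrier_matI; simp)+
    then show ?thesis unfolding W_orth by simp
  qed
  finally show ?thesis unfolding P1_W .
qed

lemma trP1': "mtrace (P1 n (PT n r V)) = of_nat (r * n)"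
proof -
  have "mtrace (W * madj W) = mtrace (madj W * W)"
    by (rule mtrace_comm[of _ "n*n*n" "r*n"]) (rule carrier_matI; simp)+
  then show ?thesis unfolding P1_W W_orth by simp
qed

lemma Uc': "U \<in> carrier_mat (n*n*n) (r*n)" by (rule carrier_matI) simp_all

end

sublocale conc \<subseteq> tp: twoproj "n*n*n" "r*n" "P1 n (PT n r V)" "P2 n (PT n r V)" U
  by unfold_locales (use P1c' Uc' U_orth P2_U P1h' P1i' trP1' in simp_all)

context conc begin

lemma Amat_AT: "tp.Amat = AT n r V"
proof -
  have "tp.Amat = madj U * P1 n (PT n r V) * U" by (rule tp.Amat_def)
  also have "\<dots> = madj U * (W * madj W) * U" unfolding P1_W ..
  also have "\<dots> = (madj U * W) * (madj W * U)" by (simp add: massoc)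
  also have "\<dots> = G * madj G" unfolding UW_G[symmetric] by (simp add: madj_mult)
  finally show ?thesis using AT_G by simp
qed

lemma Dm_eq: "tp.Dm = P1 n (PT n r V) - P2 n (PT n r V)"
  unfolding tp.Dm_def ..

end

lemma smult_eq_iff: fixes c :: complex assumes "c \<noteq> 0"
  shows "(c \<cdot>\<^sub>m Z = D) = (Z = (1 / c) \<cdot>\<^sub>m D)"
proof
  assume "c \<cdot>\<^sub>m Z = D"
  then have "(1 / c) \<cdot>\<^sub>m D = (1 / c) \<cdot>\<^sub>m (c \<cdot>\<^sub>m Z)" by simp
  also have "\<dots> = Z" using assms by (simp add: smult_smult_mat smult_one_mat)
  finally show "Z = (1 / c) \<cdot>\<^sub>m D" by simp
next
  assume "Z = (1 / c) \<cdot>\<^sub>m D"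
  then show "c \<cdot>\<^sub>m Z = D" using assms by (simp add: smult_smult_mat smult_one_mat)
qed

lemma triv_eq: assumes "trivial_sol n P" shows "P1 n P - P2 n P = 0\<^sub>m (n*n*n) (n*n*n)"
proof -
  have "P1 n P = P2 n P"
  proof (cases "P = 0\<^sub>m (n*n) (n*n)")
    case True
    show ?thesis unfolding P1_def P2_def True
      by (rule eq_matI) (auto simp: mult.assoc divmod_lt)
  next
    case False
    then have P: "P = 1\<^sub>m (n*n)" using assms unfolding trivial_sol_def by (simp add: kron_one)
    show ?thesis unfolding P1_def P2_def P kron_one by (simp add: mult.assoc)
  qed
  moreover have "dim_row (P1 n P) = n*n*n \<or> True" by simp
  ultimately show ?thesis
  proof -
    assume e: "P1 n P = P2 n P"
    have d: "dim_row (P1 n P) = n * n * n" "dim_col (P1 n P) = n * n * n"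
      using assms unfolding trivial_sol_def P1_def by auto
    show ?thesis unfolding e[symmetric] by (rule eq_matI) (use d in simp_all)
  qed
qed

theorem proposition5:
  fixes n r :: nat and V :: "nat \<Rightarrow> complex mat"
  assumes "n \<ge> 2" and "r \<ge> 1"
    and "\<And>s. s < r \<Longrightarrow> V s \<in> carrier_mat n n"
    and "\<And>s m. s < r \<Longrightarrow> m < r \<Longrightarrow> mtrace (madj (V s) * V m) = (if s = m then 1 else 0)"
  shows "(\<forall>Q::real. Q > 0 \<longrightarrow> nontrivial_solution n Q (PT n r V) \<longrightarrow>
            (\<forall>m::nat. m \<ge> 1 \<longrightarrow>
               mtrace (AT n r V ^\<^sub>m m) =
                 complex_of_real (real (r*n) + ((inverse Q)^(2*m) - 1) *
                   (real (mrank (P1 n (PT n r V) - P2 n (PT n r V))) / 2))))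
       \<and> (\<forall>Q::real. \<forall>k::nat. Q > 1 \<longrightarrow> k > 0 \<longrightarrow>
            (\<forall>m\<in>{1,2,3::nat}. mtrace (AT n r V ^\<^sub>m m) =
                 complex_of_real (real (r*n) + ((inverse Q)^(2*m) - 1) * real k))
            \<longrightarrow> nontrivial_solution n Q (PT n r V))"
proof -
  interpret conc n r V using assms by unfold_locales auto
  let ?P = "PT n r V"
  let ?Y = "P1 n ?P * P2 n ?P * P1 n ?P - P2 n ?P * P1 n ?P * P2 n ?P"
  let ?D = "P1 n ?P - P2 n ?P"
  have conv: "((complex_of_real Q)^2 \<cdot>\<^sub>m ?Y = ?D) = (?Y = complex_of_real ((inverse Q)^2) \<cdot>\<^sub>m tp.Dm)"
    if "Q > 0" for Q :: real
  proof -
    have "(complex_of_real Q)^2 \<noteq> 0" using that by simp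
    moreover have "1 / (complex_of_real Q)^2 = complex_of_real ((inverse Q)^2)"
      by (simp add: power_inverse divide_inverse)
    ultimately show ?thesis unfolding Dm_eq using smult_eq_iff by metis
  qed
  have qpow: "complex_of_real ((inverse Q)^2) ^ m = complex_of_real ((inverse Q)^(2*m))" for Q :: real and m :: nat
    by (simp add: power_mult)
  show ?thesis
  proof (intro conjI allI impI)
    fix Q :: real and m :: nat
    assume Q: "Q > 0" and ns: "nontrivial_solution n Q ?P" and m: "m \<ge> 1"
    have "(complex_of_real Q)^2 \<cdot>\<^sub>m ?Y = ?D" using ns unfolding nontrivial_solution_def is_solution_def by blast
    then have H: "?Y = complex_of_real ((inverse Q)^2) \<cdot>\<^sub>m tp.Dm" using conv[OF Q] by blast
    have "mtrace (tp.Amat ^\<^sub>m m) = of_nat (r*n) + (complex_of_real ((inverse Q)^2) ^ m - 1) * (of_nat (mrank tp.Dm) / 2)"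
      by (rule tp.part_a[OF H])
    then show "mtrace (AT n r V ^\<^sub>m m) = complex_of_real (real (r*n) + ((inverse Q)^(2*m) - 1) *
                   (real (mrank ?D) / 2))"
      unfolding Amat_AT Dm_eq qpow by simp
  next
    fix Q :: real and k :: nat
    assume Q: "Q > 1" and k: "k > 0"
      and hm: "\<forall>m\<in>{1,2,3::nat}. mtrace (AT n r V ^\<^sub>m m) =
                 complex_of_real (real (r*n) + ((inverse Q)^(2*m) - 1) * real k)"
    define q where "q = complex_of_real ((inverse Q)^2)"
    have hq: "mtrace (tp.Amat ^\<^sub>m m) = of_nat (r*n) + (q ^ m - 1) * of_nat k" if "m \<in> {1,2,3}" for m
    proof -
      have "mtrace (AT n r V ^\<^sub>m m) = complex_of_real (real (r*n) + ((inverse Q)^(2*m) - 1) * real k)"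
        using hm that by blast
      then show ?thesis unfolding Amat_AT q_def qpow by simp
    qed
    have qr: "cnj q = q" unfolding q_def by simp
    have H: "?Y = q \<cdot>\<^sub>m tp.Dm"
      by (rule tp.part_b[OF qr hq hq hq]) simp_all
    have sol: "is_solution n Q ?P"
      unfolding is_solution_def
    proof (intro conjI)
      show "?P \<in> carrier_mat (n*n) (n*n)" by (rule carrier_matI) simp_all
      show "madj ?P = ?P" unfolding PT_V0 by (simp add: madj_mult)
      show "?P * ?P = ?P"
      proof -
        have "V0 * madj V0 * (V0 * madj V0) = V0 * (madj V0 * V0 * madj V0)" by (simp add: massoc)
        also have "\<dots> = V0 * madj V0"
        proof -
          have "1\<^sub>m r * madj V0 = madj V0"
            by (rule left_mult_one_mat[of _ r "n * n"]) (rule carrier_matI; simp)+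
          then show ?thesis unfolding V0_orth by simp
        qed
        finally show ?thesis unfolding PT_V0 .
      qed
      show "(complex_of_real Q)^2 \<cdot>\<^sub>m ?Y = ?D" using conv[of Q] Q H unfolding q_def by simp
    qed
    have nt: "\<not> trivial_sol n ?P"
    proof
      assume tr: "trivial_sol n ?P"
      have D0: "tp.Dm = 0\<^sub>m (n*n*n) (n*n*n)" unfolding Dm_eq using triv_eq[OF tr] .
      have "mtrace (tp.Dm * tp.Dm) = 0" unfolding D0 mtrace_def by simp
      then have "mtrace (P1 n ?P * P2 n ?P) = of_nat (r * n)" using tp.trDD by simp
      moreover have "mtrace (P1 n ?P * P2 n ?P) = of_nat (r*n) + (q - 1) * of_nat k"
        using hq[of 1] tp.t1 by simp
      ultimately have "(q - 1) * of_nat k = 0" by simp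
      then have "q = 1" using k by simp
      then have "(inverse Q)^2 = 1" unfolding q_def by (metis of_real_eq_1_iff)
      moreover have "inverse Q < 1" "inverse Q > 0" using Q by (simp_all add: inverse_less_1_iff)
      moreover have "inverse Q * inverse Q < 1 * 1"
        using \<open>inverse Q < 1\<close> \<open>inverse Q > 0\<close> by (intro mult_strict_mono) auto
      ultimately show False by (simp add: power2_eq_square)
    qed
    show "nontrivial_solution n Q ?P" unfolding nontrivial_solution_def using sol nt by blast
  qed
qed


end
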